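(* Let $G$ be an étale locally compact Hausdorff groupoid with unit space $G^{(0)}$, and let $\Sigma \rightarrow G$ be a twist over $G$. Then for each $f \in \ell^2(\Sigma; G)$ the function on $G^{(0)}$ defined by $$x \mapsto \max \left\{ \sum_{\gamma \in G_x} |f(\gamma)|^2,\ \sum_{\gamma \in G^x} |f(\gamma)|^2\right\}^{1/2}$$ is continuous.
   Context: A twist $\Sigma\rightarrow G$ is a locally trivial central extension $\mathbb{T}\times G^{(0)} \to \Sigma \to G$ of groupoids. It determines a complex line bundle $L=(\mathbb{C}\times\Sigma)/\sim$ over $G$, where $(z_1,\sigma_1)\sim(z_2,\sigma_2)$ iff $(z_1,\sigma_1)=(\overline{\lambda}z_2,\lambda\cdot\sigma_2)$ for some $\lambda\in\mathbb{T}$; the absolute value $|[z,\sigma]|=|z|$ is well defined. $C_c(\Sigma;G)$ denotes the continuous compactly supported sections $G\to L$. For $x\in G^{(0)}$, $G_x=\{\gamma: s(\gamma)=x\}$ and $G^x=\{\gamma: r(\gamma)=x\}$. The $2$-norm on $C_c(\Sigma;G)$ is $\|f\|_2=\sup_{x\in G^{(0)}}\max\{\sum_{\gamma\in G_x}|f(\gamma)|^2,\sum_{\gamma\in G^x}|f(\gamma)|^2\}^{1/2}$, and $\ell^2(\Sigma;G)$ is the completion of $C_c(\Sigma;G)$ in $\|\cdot\|_2$, realized as a space of continuous sections of $L$ (the $2$-norm dominates the sup-norm). *)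

theory Defs
  imports "HOL-Analysis.Analysis" "HOL-Library.Extended_Nonnegative_Real"
begin

definition groupoid ::
  "'g set \<Rightarrow> ('g \<Rightarrow> 'g) \<Rightarrow> ('g \<Rightarrow> 'g) \<Rightarrow> ('g \<Rightarrow> 'g \<Rightarrow> 'g) \<Rightarrow> ('g \<Rightarrow> 'g) \<Rightarrow> bool" where
  "groupoid G r s m i \<longleftrightarrow>
     (\<forall>a\<in>G. r a \<in> G \<and> s a \<in> G \<and> i a \<in> G) \<and>
     (\<forall>a\<in>G. r (r a) = r a \<and> s (r a) = r a \<and> r (s a) = s a \<and> s (s a) = s a) \<and>
     (\<forall>a\<in>G. \<forall>b\<in>G. s a = r b \<longrightarrow> m a b \<in> G \<and> r (m a b) = r a \<and> s (m a b) = s b) \<and>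
     (\<forall>a\<in>G. \<forall>b\<in>G. \<forall>c\<in>G. s a = r b \<longrightarrow> s b = r c \<longrightarrow> m (m a b) c = m a (m b c)) \<and>
     (\<forall>a\<in>G. m (r a) a = a \<and> m a (s a) = a) \<and>
     (\<forall>a\<in>G. r (i a) = s a \<and> s (i a) = r a \<and> m a (i a) = r a \<and> m (i a) a = s a)"

definition units :: "'g set \<Rightarrow> ('g \<Rightarrow> 'g) \<Rightarrow> 'g set" where
  "units G r = r ` G"

definition composable :: "'g set \<Rightarrow> ('g \<Rightarrow> 'g) \<Rightarrow> ('g \<Rightarrow> 'g) \<Rightarrow> ('g \<times> 'g) set" where
  "composable G r s = {(a, b). a \<in> G \<and> b \<in> G \<and> s a = r b}"

definition topological_groupoid ::
  "'g topology \<Rightarrow> ('g \<Rightarrow> 'g) \<Rightarrow> ('g \<Rightarrow> 'g) \<Rightarrow> ('g \<Rightarrow> 'g \<Rightarrow> 'g) \<Rightarrow> ('g \<Rightarrow> 'g) \<Rightarrow> bool" where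
  "topological_groupoid T r s m i \<longleftrightarrow>
     groupoid (topspace T) r s m i \<and>
     continuous_map (subtopology (prod_topology T T) (composable (topspace T) r s)) T
        (\<lambda>(a, b). m a b) \<and>
     continuous_map T T i \<and> continuous_map T T r \<and> continuous_map T T s"

definition etale_groupoid ::
  "'g topology \<Rightarrow> ('g \<Rightarrow> 'g) \<Rightarrow> ('g \<Rightarrow> 'g) \<Rightarrow> ('g \<Rightarrow> 'g \<Rightarrow> 'g) \<Rightarrow> ('g \<Rightarrow> 'g) \<Rightarrow> bool" where
  "etale_groupoid T r s m i \<longleftrightarrow>
     topological_groupoid T r s m i \<and>
     (\<forall>g\<in>topspace T. \<exists>U. openin T U \<and> g \<in> U \<and> openin T (r ` U) \<and>
        homeomorphic_map (subtopology T U) (subtopology T (r ` U)) r)"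

definition circle :: "complex set" where
  "circle = sphere 0 1"

definition twist ::
  "'g topology \<Rightarrow> ('g \<Rightarrow> 'g) \<Rightarrow> ('g \<Rightarrow> 'g) \<Rightarrow> ('g \<Rightarrow> 'g \<Rightarrow> 'g) \<Rightarrow> ('g \<Rightarrow> 'g) \<Rightarrow>
   's topology \<Rightarrow> ('s \<Rightarrow> 's) \<Rightarrow> ('s \<Rightarrow> 's) \<Rightarrow> ('s \<Rightarrow> 's \<Rightarrow> 's) \<Rightarrow> ('s \<Rightarrow> 's) \<Rightarrow>
   (complex \<times> 'g \<Rightarrow> 's) \<Rightarrow> ('s \<Rightarrow> 'g) \<Rightarrow> bool" where
  "twist TG r s m i TS rS sS mS iS \<iota> \<pi> \<longleftrightarrow>
     (let G = topspace TG; G0 = units G r; S = topspace TS in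
     topological_groupoid TS rS sS mS iS \<and>
     \<comment> \<open>pi: continuous surjective groupoid homomorphism\<close>
     continuous_map TS TG \<pi> \<and> \<pi> ` S = G \<and>
     (\<forall>\<sigma>\<in>S. \<pi> (rS \<sigma>) = r (\<pi> \<sigma>) \<and> \<pi> (sS \<sigma>) = s (\<pi> \<sigma>)) \<and>
     (\<forall>a\<in>S. \<forall>b\<in>S. sS a = rS b \<longrightarrow> \<pi> (mS a b) = m (\<pi> a) (\<pi> b)) \<and>
     \<comment> \<open>pi is a bijection on unit spaces\<close>
     inj_on \<pi> (units S rS) \<and>
     \<comment> \<open>iota: injective groupoid homomorphism from the trivial bundle circle x G0\<close>
     (\<forall>z\<in>circle. \<forall>x\<in>G0. \<iota> (z, x) \<in> S \<and> \<pi> (\<iota> (z, x)) = x \<and>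
         rS (\<iota> (z, x)) = \<iota> (1, x) \<and> sS (\<iota> (z, x)) = \<iota> (1, x)) \<and>
     (\<forall>z\<in>circle. \<forall>w\<in>circle. \<forall>x\<in>G0. mS (\<iota> (z, x)) (\<iota> (w, x)) = \<iota> (z * w, x)) \<and>
     inj_on \<iota> (circle \<times> G0) \<and>
     \<comment> \<open>exactness, with iota a homeomorphism onto pi^{-1}(G0)\<close>
     \<iota> ` (circle \<times> G0) = {\<sigma>\<in>S. \<pi> \<sigma> \<in> G0} \<and>
     homeomorphic_map (prod_topology (subtopology euclidean circle) (subtopology TG G0))
        (subtopology TS {\<sigma>\<in>S. \<pi> \<sigma> \<in> G0}) \<iota> \<and>
     \<comment> \<open>centrality\<close>
     (\<forall>\<sigma>\<in>S. \<forall>z\<in>circle. mS (\<iota> (z, r (\<pi> \<sigma>))) \<sigma> = mS \<sigma> (\<iota> (z, s (\<pi> \<sigma>)))) \<and>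
     \<comment> \<open>local triviality\<close>
     (\<forall>g\<in>G. \<exists>U P. openin TG U \<and> g \<in> U \<and>
        continuous_map (subtopology TG U) TS P \<and>
        (\<forall>a\<in>U. P a \<in> S \<and> \<pi> (P a) = a) \<and>
        homeomorphic_map (prod_topology (subtopology euclidean circle) (subtopology TG U))
           (subtopology TS {\<sigma>\<in>S. \<pi> \<sigma> \<in> U}) (\<lambda>(z, a). mS (\<iota> (z, r a)) (P a))))"

definition tact :: "('g \<Rightarrow> 'g) \<Rightarrow> ('s \<Rightarrow> 's \<Rightarrow> 's) \<Rightarrow> (complex \<times> 'g \<Rightarrow> 's) \<Rightarrow> ('s \<Rightarrow> 'g) \<Rightarrow>
   complex \<Rightarrow> 's \<Rightarrow> 's" where
  "tact r mS \<iota> \<pi> z \<sigma> = mS (\<iota> (z, r (\<pi> \<sigma>))) \<sigma>"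

section \<open>The line bundle L = (C x Sigma)/~\<close>

definition Lrel :: "'s set \<Rightarrow> ('g \<Rightarrow> 'g) \<Rightarrow> ('s \<Rightarrow> 's \<Rightarrow> 's) \<Rightarrow> (complex \<times> 'g \<Rightarrow> 's) \<Rightarrow>
   ('s \<Rightarrow> 'g) \<Rightarrow> ((complex \<times> 's) \<times> (complex \<times> 's)) set" where
  "Lrel S r mS \<iota> \<pi> = {((z1, \<sigma>1), (z2, \<sigma>2)). \<sigma>1 \<in> S \<and> \<sigma>2 \<in> S \<and>
      (\<exists>w\<in>circle. z1 = cnj w * z2 \<and> \<sigma>1 = tact r mS \<iota> \<pi> w \<sigma>2)}"

definition quot_topology :: "'a topology \<Rightarrow> ('a \<times> 'a) set \<Rightarrow> 'a set topology" where
  "quot_topology X R = topology (\<lambda>U. U \<subseteq> topspace X // R \<and> openin X (\<Union>U))"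

definition Ltop :: "'s topology \<Rightarrow> ('g \<Rightarrow> 'g) \<Rightarrow> ('s \<Rightarrow> 's \<Rightarrow> 's) \<Rightarrow> (complex \<times> 'g \<Rightarrow> 's) \<Rightarrow>
   ('s \<Rightarrow> 'g) \<Rightarrow> (complex \<times> 's) set topology" where
  "Ltop TS r mS \<iota> \<pi> = quot_topology (prod_topology euclidean TS) (Lrel (topspace TS) r mS \<iota> \<pi>)"

text \<open>Absolute value |[z,sigma]| = |z|, and the distance |c1 - c2| within a fibre
 (computed with representatives sharing the same sigma).\<close>
definition Labs :: "(complex \<times> 's) set \<Rightarrow> real" where
  "Labs c = cmod (fst (SOME p. p \<in> c))"

definition Ldist :: "(complex \<times> 's) set \<Rightarrow> (complex \<times> 's) set \<Rightarrow> real" where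
  "Ldist c1 c2 = (SOME d. \<exists>\<sigma> z1 z2. (z1, \<sigma>) \<in> c1 \<and> (z2, \<sigma>) \<in> c2 \<and> d = cmod (z1 - z2))"

definition cont_section :: "'g topology \<Rightarrow> 's topology \<Rightarrow> ('g \<Rightarrow> 'g) \<Rightarrow> ('s \<Rightarrow> 's \<Rightarrow> 's) \<Rightarrow>
   (complex \<times> 'g \<Rightarrow> 's) \<Rightarrow> ('s \<Rightarrow> 'g) \<Rightarrow> ('g \<Rightarrow> (complex \<times> 's) set) \<Rightarrow> bool" where
  "cont_section TG TS r mS \<iota> \<pi> f \<longleftrightarrow>
     continuous_map TG (Ltop TS r mS \<iota> \<pi>) f \<and>
     (\<forall>\<gamma>\<in>topspace TG. \<forall>p\<in>f \<gamma>. \<pi> (snd p) = \<gamma>)"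

definition Cc :: "'g topology \<Rightarrow> 's topology \<Rightarrow> ('g \<Rightarrow> 'g) \<Rightarrow> ('s \<Rightarrow> 's \<Rightarrow> 's) \<Rightarrow>
   (complex \<times> 'g \<Rightarrow> 's) \<Rightarrow> ('s \<Rightarrow> 'g) \<Rightarrow> ('g \<Rightarrow> (complex \<times> 's) set) set" where
  "Cc TG TS r mS \<iota> \<pi> = {f. cont_section TG TS r mS \<iota> \<pi> f \<and>
      compactin TG (TG closure_of {\<gamma>\<in>topspace TG. Labs (f \<gamma>) \<noteq> 0})}"

definition l2sq :: "'g set \<Rightarrow> ('g \<Rightarrow> 'g) \<Rightarrow> ('g \<Rightarrow> 'g) \<Rightarrow> ('g \<Rightarrow> real) \<Rightarrow> ennreal" where
  "l2sq G r s a = (SUP x\<in>units G r.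
      max (\<Sum>\<^sub>\<infinity>\<gamma>\<in>{\<gamma>\<in>G. s \<gamma> = x}. ennreal ((a \<gamma>)\<^sup>2))
          (\<Sum>\<^sub>\<infinity>\<gamma>\<in>{\<gamma>\<in>G. r \<gamma> = x}. ennreal ((a \<gamma>)\<^sup>2)))"

text \<open>ell^2(Sigma;G): the completion of C_c(Sigma;G) in the 2-norm, realized as the
 continuous sections that are 2-norm limits of sequences in C_c(Sigma;G).\<close>
definition ell2 :: "'g topology \<Rightarrow> 's topology \<Rightarrow> ('g \<Rightarrow> 'g) \<Rightarrow> ('g \<Rightarrow> 'g) \<Rightarrow> ('s \<Rightarrow> 's \<Rightarrow> 's) \<Rightarrow>
   (complex \<times> 'g \<Rightarrow> 's) \<Rightarrow> ('s \<Rightarrow> 'g) \<Rightarrow> ('g \<Rightarrow> (complex \<times> 's) set) set" where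
  "ell2 TG TS r s mS \<iota> \<pi> = {f. cont_section TG TS r mS \<iota> \<pi> f \<and>
      (\<exists>fn. (\<forall>n. fn n \<in> Cc TG TS r mS \<iota> \<pi>) \<and>
         ((\<lambda>n. l2sq (topspace TG) r s (\<lambda>\<gamma>. Ldist (f \<gamma>) (fn n \<gamma>))) \<longlongrightarrow> 0) sequentially)}"

end

theory Submission
  imports Defs
begin


lemma cont_real_iff:
  "continuous_map X euclidean (f::'a\<Rightarrow>real) \<longleftrightarrow>
    (\<forall>x \<in> topspace X. \<forall>\<epsilon>>0. \<exists>U. openin X U \<and> x \<in> U \<and> (\<forall>y\<in>U. \<bar>f y - f x\<bar> < \<epsilon>))"
  using Met_TC.continuous_map_to_metric[of X f]
  by (simp add: dist_real_def abs_minus_commute)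

lemma loc_cont:
  fixes f :: "'a \<Rightarrow> real"
  assumes "\<And>x. x \<in> topspace X \<Longrightarrow> \<exists>U g. openin X U \<and> x \<in> U \<and>
      continuous_map (subtopology X U) euclidean g \<and> (\<forall>y\<in>U. f y = g y)"
  shows "continuous_map X euclidean f"
  unfolding cont_real_iff
proof (intro ballI allI impI)
  fix x and e :: real assume x: "x \<in> topspace X" and e: "e > 0"
  obtain U g where U: "openin X U" "x \<in> U" and g: "continuous_map (subtopology X U) euclidean g"
    and fg: "\<forall>y\<in>U. f y = g y" using assms[OF x] by blast
  have "x \<in> topspace (subtopology X U)" using U x by simp
  with g e obtain V where V: "openin (subtopology X U) V" "x \<in> V" "\<forall>y\<in>V. \<bar>g y - g x\<bar> < e"
    unfolding cont_real_iff by blast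
  have VU: "V \<subseteq> U" using V(1) by (meson openin_imp_subset)
  show "\<exists>U. openin X U \<and> x \<in> U \<and> (\<forall>y\<in>U. \<bar>f y - f x\<bar> < e)"
  proof (intro exI[of _ V] conjI)
    show "openin X V" using V(1) U(1) by (rule openin_trans_full)
    show "x \<in> V" by (rule V(2))
    show "\<forall>y\<in>V. \<bar>f y - f x\<bar> < e" using V(3) VU fg U(2) by auto
  qed
qed

lemma unif_lim:
  fixes f :: "'a \<Rightarrow> real" and g :: "nat \<Rightarrow> 'a \<Rightarrow> real"
  assumes "\<And>n. continuous_map X euclidean (g n)"
    and "\<And>n x. n \<ge> N \<Longrightarrow> x \<in> topspace X \<Longrightarrow> \<bar>g n x - f x\<bar> \<le> c n"
    and "c \<longlonglongrightarrow> 0"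
  shows "continuous_map X euclidean f"
proof -
  have "continuous_map X Met_TC.mtopology f"
  proof (rule Met_TC.continuous_map_uniform_limit[where F=sequentially and f=g])
    show "\<forall>\<^sub>F n in sequentially. continuous_map X Met_TC.mtopology (g n)" using assms(1) by simp
    fix e :: real assume e: "0 < e"
    from assms(3) e have "\<forall>\<^sub>F n in sequentially. \<bar>c n\<bar> < e"
      using tendsto_rabs_zero[OF assms(3)] e by (auto dest: order_tendstoD(2))
    moreover have "\<forall>\<^sub>F n in sequentially. n \<ge> N" by (simp add: eventually_ge_at_top)
    ultimately show "\<forall>\<^sub>F n in sequentially. \<forall>x\<in>topspace X. f x \<in> UNIV \<and> dist (g n x) (f x) < e"
    proof eventually_elim
      case (elim n)
      then show ?case using assms(2)[of n] by (fastforce simp: dist_real_def abs_minus_commute)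
    qed
  qed simp
  then show ?thesis by simp
qed



lemma fibre_finite:
  assumes loc: "\<And>g. g \<in> topspace X \<Longrightarrow> \<exists>U. openin X U \<and> g \<in> U \<and> inj_on p U"
    and K: "compactin X K"
  shows "finite {\<gamma>\<in>topspace X. p \<gamma> = y \<and> \<gamma> \<in> K}"
proof -
  obtain U where U: "\<And>g. g \<in> topspace X \<Longrightarrow> openin X (U g) \<and> g \<in> U g \<and> inj_on p (U g)"
    using loc by metis
  have Ksub: "K \<subseteq> topspace X" using K by (rule compactin_subset_topspace)
  have "(\<forall>V\<in>U ` K. openin X V) \<and> K \<subseteq> \<Union>(U ` K)" using U Ksub by blast
  then obtain \<F> where F: "finite \<F>" "\<F> \<subseteq> U ` K" "K \<subseteq> \<Union>\<F>"
    using K unfolding compactin_def by meson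
  have "{\<gamma>\<in>topspace X. p \<gamma> = y \<and> \<gamma> \<in> K} \<subseteq> (\<Union>V\<in>\<F>. p -` {y} \<inter> V)"
    using F(3) by blast
  moreover have "finite (\<Union>V\<in>\<F>. p -` {y} \<inter> V)"
  proof (rule finite_UN_I[OF F(1)])
    fix V assume "V \<in> \<F>"
    then obtain g where "g \<in> K" "V = U g" using F(2) by blast
    then have "inj_on p V" using U Ksub by blast
    then show "finite (p -` {y} \<inter> V)" by (intro finite_vimage_IntI) auto
  qed
  ultimately show ?thesis by (rule finite_subset)
qed

lemma fibre_cont:
  fixes X :: "'a topology" and p :: "'a \<Rightarrow> 'a" and b :: "'a \<Rightarrow> real"
  assumes H: "Hausdorff_space X" and pc: "continuous_map X X p"
    and loc: "\<And>g. g \<in> topspace X \<Longrightarrow> \<exists>U. openin X U \<and> g \<in> U \<and> openin X (p ` U) \<and>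
       homeomorphic_map (subtopology X U) (subtopology X (p ` U)) p"
    and bc: "continuous_map X euclidean b" and K: "compactin X K"
    and supp: "\<And>\<gamma>. \<gamma> \<in> topspace X \<Longrightarrow> b \<gamma> \<noteq> 0 \<Longrightarrow> \<gamma> \<in> K"
  shows "continuous_map X euclidean (\<lambda>y. \<Sum>\<gamma>\<in>{\<gamma>\<in>topspace X. p \<gamma> = y \<and> \<gamma> \<in> K}. (b \<gamma>)\<^sup>2)"
proof -
  have ex: "\<exists>Uq. g \<in> topspace X \<longrightarrow> openin X (fst Uq) \<and> g \<in> fst Uq \<and> openin X (p ` fst Uq) \<and>
       homeomorphic_maps (subtopology X (fst Uq)) (subtopology X (p ` fst Uq)) p (snd Uq)" for g
  proof (cases "g \<in> topspace X")
    case True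
    then obtain V where V: "openin X V" "g \<in> V" "openin X (p ` V)"
       "homeomorphic_map (subtopology X V) (subtopology X (p ` V)) p" using loc by blast
    then obtain h where "homeomorphic_maps (subtopology X V) (subtopology X (p ` V)) p h"
      using homeomorphic_map_maps by blast
    then show ?thesis using V by (intro exI[of _ "(V,h)"]) simp
  qed simp
  obtain F where F: "\<forall>g. g \<in> topspace X \<longrightarrow> openin X (fst (F g)) \<and> g \<in> fst (F g) \<and> openin X (p ` fst (F g)) \<and>
       homeomorphic_maps (subtopology X (fst (F g))) (subtopology X (p ` fst (F g))) p (snd (F g))"
    using choice[of "\<lambda>g Uq. g \<in> topspace X \<longrightarrow> openin X (fst Uq) \<and> g \<in> fst Uq \<and> openin X (p ` fst Uq) \<and>
       homeomorphic_maps (subtopology X (fst Uq)) (subtopology X (p ` fst Uq)) p (snd Uq)"] ex by blast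
  define U where "U g = fst (F g)" for g
  define q where "q g = snd (F g)" for g
  have Uq: "openin X (U g) \<and> g \<in> U g \<and> openin X (p ` U g) \<and>
       homeomorphic_maps (subtopology X (U g)) (subtopology X (p ` U g)) p (q g)" if "g \<in> topspace X" for g
    using F that unfolding U_def q_def by blast
  have Ut: "U g \<subseteq> topspace X" if "g \<in> topspace X" for g
    using Uq[OF that] openin_subset by blast
  have qp: "q g (p a) = a" if "g \<in> topspace X" "a \<in> U g" for g a
    using Uq[OF that(1)] Ut[OF that(1)] that(2) unfolding homeomorphic_maps_def by auto
  have qc: "continuous_map (subtopology X (p ` U g)) X (q g)" if "g \<in> topspace X" for g
    using Uq[OF that] unfolding homeomorphic_maps_def
    by (blast intro: continuous_map_into_fulltopology)
  have qin: "q g y \<in> U g \<and> p (q g y) = y" if "g \<in> topspace X" "y \<in> p ` U g" for g y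
    using that qp Ut by auto
  have injp: "inj_on p (U g)" if "g \<in> topspace X" for g
    by (rule inj_on_inverseI[where g="q g"]) (rule qp[OF that])
  have openmap: "openin X (p ` V)" if "g \<in> topspace X" "openin X V" "V \<subseteq> U g" for g V
  proof -
    have "open_map (subtopology X (U g)) (subtopology X (p ` U g)) p"
      using Uq[OF that(1)] homeomorphic_maps_imp_map homeomorphic_imp_open_map by blast
    moreover have "openin (subtopology X (U g)) V"
      unfolding openin_subtopology using that(2,3) by (intro exI[of _ V]) blast
    ultimately have "openin (subtopology X (p ` U g)) (p ` V)" unfolding open_map_def by blast
    then show ?thesis using Uq[OF that(1)] by (blast intro: openin_trans_full)
  qed
  have fin: "finite {\<gamma>\<in>topspace X. p \<gamma> = y \<and> \<gamma> \<in> K}" for y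
    by (rule fibre_finite[OF _ K]) (use Uq injp in blast)
  have hs: "\<forall>ac. \<exists>P. fst ac \<in> topspace X \<and> snd ac \<in> topspace X \<and> fst ac \<noteq> snd ac \<longrightarrow>
      openin X (fst P) \<and> openin X (snd P) \<and> fst ac \<in> fst P \<and> snd ac \<in> snd P \<and> disjnt (fst P) (snd P)"
  proof
    fix ac :: "'a \<times> 'a"
    show "\<exists>P. fst ac \<in> topspace X \<and> snd ac \<in> topspace X \<and> fst ac \<noteq> snd ac \<longrightarrow>
      openin X (fst P) \<and> openin X (snd P) \<and> fst ac \<in> fst P \<and> snd ac \<in> snd P \<and> disjnt (fst P) (snd P)"
    proof (cases "fst ac \<in> topspace X \<and> snd ac \<in> topspace X \<and> fst ac \<noteq> snd ac")
      case True
      then obtain U1 V1 where "openin X U1" "openin X V1" "fst ac \<in> U1" "snd ac \<in> V1" "disjnt U1 V1"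
        using H unfolding Hausdorff_space_def by blast
      then show ?thesis by (intro exI[of _ "(U1,V1)"]) simp
    qed auto
  qed
  obtain Sep0 where Sep0: "\<And>ac. fst ac \<in> topspace X \<Longrightarrow> snd ac \<in> topspace X \<Longrightarrow> fst ac \<noteq> snd ac \<Longrightarrow>
      openin X (fst (Sep0 ac)) \<and> openin X (snd (Sep0 ac)) \<and> fst ac \<in> fst (Sep0 ac) \<and> snd ac \<in> snd (Sep0 ac) \<and> disjnt (fst (Sep0 ac)) (snd (Sep0 ac))"
    using choice[OF hs] by blast
  define A where "A a c = fst (Sep0 (a, c))" for a c
  define B where "B a c = snd (Sep0 (a, c))" for a c
  have Sep: "openin X (A a c) \<and> openin X (B a c) \<and> a \<in> A a c \<and> c \<in> B a c \<and> A a c \<inter> B a c = {}"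
    if "a \<in> topspace X" "c \<in> topspace X" "a \<noteq> c" for a c
    using Sep0[of "(a,c)"] that unfolding A_def B_def disjnt_def by auto
  show ?thesis
  proof (rule loc_cont)
    fix y0 assume y0: "y0 \<in> topspace X"
    define F0 where "F0 = {\<gamma>\<in>topspace X. p \<gamma> = y0 \<and> \<gamma> \<in> K}"
    have F0fin: "finite F0" unfolding F0_def by (rule fin)
    have F0t: "F0 \<subseteq> topspace X" unfolding F0_def by blast
    define V where "V \<gamma> = U \<gamma> \<inter> ((\<Inter>\<delta>\<in>F0-{\<gamma>}. A \<gamma> \<delta> \<inter> B \<delta> \<gamma>) \<inter> topspace X)" for \<gamma>
    have Vo: "openin X (V \<gamma>)" if "\<gamma> \<in> F0" for \<gamma>
      unfolding V_def
    proof (rule openin_Int)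
      show "openin X (U \<gamma>)" using Uq F0t that by blast
      show "openin X ((\<Inter>\<delta>\<in>F0-{\<gamma>}. A \<gamma> \<delta> \<inter> B \<delta> \<gamma>) \<inter> topspace X)"
        by (rule openin_INT) (use F0fin Sep F0t that in auto)
    qed
    have VU: "V \<gamma> \<subseteq> U \<gamma>" for \<gamma> unfolding V_def by blast
    have inV: "\<gamma> \<in> V \<gamma>" if "\<gamma> \<in> F0" for \<gamma>
      unfolding V_def using Uq Sep F0t that by auto
    have Vdisj: "V \<gamma> \<inter> V \<delta> = {}" if "\<gamma> \<in> F0" "\<delta> \<in> F0" "\<gamma> \<noteq> \<delta>" for \<gamma> \<delta>
    proof -
      have "V \<gamma> \<subseteq> A \<gamma> \<delta>" unfolding V_def using that by blast
      moreover have "V \<delta> \<subseteq> B \<gamma> \<delta>" unfolding V_def using that by blast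
      ultimately show ?thesis using Sep[of \<gamma> \<delta>] that F0t by blast
    qed
    define C where "C = (topspace X - (\<Union>\<gamma>\<in>F0. V \<gamma>)) \<inter> K"
    have "compactin X C" unfolding C_def
      by (rule closed_Int_compactin[OF _ K]) (use Vo in blast)
    then have pCc: "closedin X (p ` C)"
      using H pc by (blast intro: compactin_imp_closedin image_compactin)
    have y0C: "y0 \<notin> p ` C"
    proof
      assume "y0 \<in> p ` C"
      then obtain \<eta> where "\<eta> \<in> C" "p \<eta> = y0" by blast
      then have "\<eta> \<in> F0" unfolding C_def F0_def by blast
      with \<open>\<eta> \<in> C\<close> inV show False unfolding C_def by blast
    qed
    define W where "W = (topspace X - p ` C) \<inter> ((\<Inter>\<gamma>\<in>F0. p ` V \<gamma>) \<inter> topspace X)"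
    have Wo: "openin X W" unfolding W_def
    proof (rule openin_Int)
      show "openin X (topspace X - p ` C)" using pCc by blast
      show "openin X ((\<Inter>\<gamma>\<in>F0. p ` V \<gamma>) \<inter> topspace X)"
        by (rule openin_INT[OF F0fin]) (use openmap Vo VU F0t in blast)
    qed
    have y0W: "y0 \<in> W" unfolding W_def using y0 y0C inV unfolding F0_def by blast
    define g where "g y = (\<Sum>\<gamma>\<in>F0. (b (q \<gamma> y))\<^sup>2)" for y
    have gc: "continuous_map (subtopology X W) euclidean g"
      unfolding g_def
    proof (rule continuous_map_sum[OF F0fin])
      fix \<gamma> assume \<gamma>: "\<gamma> \<in> F0"
      have "W \<subseteq> p ` U \<gamma>" unfolding W_def using \<gamma> VU by blast
      then have "continuous_map (subtopology X W) X (q \<gamma>)"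
        using qc[of \<gamma>] \<gamma> F0t continuous_map_from_subtopology_mono by blast
      then have c: "continuous_map (subtopology X W) euclidean (\<lambda>y. b (q \<gamma> y))"
        using bc continuous_map_compose[of _ X "q \<gamma>" euclidean b] by (simp add: o_def)
      show "continuous_map (subtopology X W) euclidean (\<lambda>y. (b (q \<gamma> y))\<^sup>2)"
        using continuous_map_real_mult[OF c c] by (simp add: power2_eq_square)
    qed
    have eq: "(\<Sum>\<gamma>\<in>{\<gamma>\<in>topspace X. p \<gamma> = y \<and> \<gamma> \<in> K}. (b \<gamma>)\<^sup>2) = g y" if yW: "y \<in> W" for y
    proof -
      define h where "h \<gamma> = q \<gamma> y" for \<gamma>
      have hV: "h \<gamma> \<in> V \<gamma> \<and> p (h \<gamma>) = y" if "\<gamma> \<in> F0" for \<gamma>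
      proof -
        from yW that obtain v where v: "v \<in> V \<gamma>" "y = p v" unfolding W_def by blast
        have "q \<gamma> (p v) = v" using qp[of \<gamma> v] VU F0t that v(1) by blast
        then show ?thesis unfolding h_def using v by simp
      qed
      have inj: "inj_on h F0"
      proof (rule inj_onI)
        fix a c assume "a \<in> F0" "c \<in> F0" "h a = h c"
        then show "a = c" using hV[of a] hV[of c] Vdisj[of a c] by auto
      qed
      define E where "E = {\<gamma>\<in>topspace X. p \<gamma> = y \<and> \<gamma> \<in> K}"
      have sub: "E \<subseteq> h ` F0"
      proof
        fix \<eta> assume \<eta>: "\<eta> \<in> E"
        have "\<eta> \<notin> C" using \<eta> yW unfolding E_def W_def by blast
        then obtain \<gamma> where \<gamma>: "\<gamma> \<in> F0" "\<eta> \<in> V \<gamma>" using \<eta> unfolding C_def E_def by blast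
        then have "h \<gamma> = \<eta>" unfolding h_def using \<eta> qp[of \<gamma> \<eta>] VU F0t unfolding E_def by auto
        then show "\<eta> \<in> h ` F0" using \<gamma> by blast
      qed
      have "(\<Sum>\<gamma>\<in>E. (b \<gamma>)\<^sup>2) = (\<Sum>\<gamma>\<in>h ` F0. (b \<gamma>)\<^sup>2)"
      proof (rule sum.mono_neutral_left[OF _ sub])
        show "finite (h ` F0)" using F0fin by blast
        show "\<forall>x\<in>h ` F0 - E. (b x)\<^sup>2 = 0"
        proof
          fix x assume x: "x \<in> h ` F0 - E"
          then obtain \<gamma> where \<gamma>: "\<gamma> \<in> F0" "x = h \<gamma>" by blast
          have "x \<in> V \<gamma>" "p x = y" using hV[OF \<gamma>(1)] \<gamma>(2) by auto
          moreover have "V \<gamma> \<subseteq> topspace X" using VU[of \<gamma>] Ut[of \<gamma>] F0t \<gamma>(1) by blast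
          ultimately have "x \<in> topspace X" "p x = y" by auto
          then have "x \<notin> K" using x unfolding E_def by blast
          then show "(b x)\<^sup>2 = 0" using supp \<open>x \<in> topspace X\<close> by fastforce
        qed
      qed
      also have "\<dots> = g y" unfolding g_def h_def[symmetric] by (simp add: sum.reindex[OF inj])
      finally show ?thesis unfolding E_def .
    qed
    show "\<exists>U g. openin X U \<and> y0 \<in> U \<and> continuous_map (subtopology X U) euclidean g \<and>
        (\<forall>y\<in>U. (\<Sum>\<gamma>\<in>{\<gamma>\<in>topspace X. p \<gamma> = y \<and> \<gamma> \<in> K}. (b \<gamma>)\<^sup>2) = g y)"
      by (rule exI[of _ W], rule exI[of _ g]) (use Wo y0W gc eq in simp)
  qed
qed



lemma fin_le_infsum:
  fixes h :: "'a \<Rightarrow> real"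
  assumes "finite E" "E \<subseteq> F"
  shows "ennreal (\<Sum>x\<in>E. (h x)\<^sup>2) \<le> (\<Sum>\<^sub>\<infinity>x\<in>F. ennreal ((h x)\<^sup>2))"
proof -
  have "ennreal (\<Sum>x\<in>E. (h x)\<^sup>2) = (\<Sum>x\<in>E. ennreal ((h x)\<^sup>2))"
    by (rule sum_ennreal[symmetric]) simp
  also have "\<dots> \<le> (SUP E\<in>{E. finite E \<and> E \<subseteq> F}. \<Sum>x\<in>E. ennreal ((h x)\<^sup>2))"
    by (rule SUP_upper) (use assms in simp)
  also have "\<dots> = (\<Sum>\<^sub>\<infinity>x\<in>F. ennreal ((h x)\<^sup>2))"
    by (rule nonneg_infsum_complete[symmetric]) simp
  finally show ?thesis .
qed

lemma mink_le:
  fixes a b d :: "'a \<Rightarrow> real"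
  assumes a0: "\<And>x. x \<in> F \<Longrightarrow> 0 \<le> a x" and ad: "\<And>x. x \<in> F \<Longrightarrow> a x \<le> b x + d x"
    and bB: "(\<Sum>\<^sub>\<infinity>x\<in>F. ennreal ((b x)\<^sup>2)) \<le> ennreal B"
    and dD: "(\<Sum>\<^sub>\<infinity>x\<in>F. ennreal ((d x)\<^sup>2)) \<le> ennreal D"
    and B0: "0 \<le> B" and D0: "0 \<le> D"
  shows "(\<Sum>\<^sub>\<infinity>x\<in>F. ennreal ((a x)\<^sup>2)) \<le> ennreal ((sqrt B + sqrt D)\<^sup>2)"
proof -
  have "(\<Sum>\<^sub>\<infinity>x\<in>F. ennreal ((a x)\<^sup>2)) = (SUP E\<in>{E. finite E \<and> E \<subseteq> F}. \<Sum>x\<in>E. ennreal ((a x)\<^sup>2))"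
    by (rule nonneg_infsum_complete) simp
  also have "\<dots> \<le> ennreal ((sqrt B + sqrt D)\<^sup>2)"
  proof (rule SUP_least)
    fix E assume E: "E \<in> {E. finite E \<and> E \<subseteq> F}"
    have eq: "(\<Sum>x\<in>E. ennreal ((a x)\<^sup>2)) = ennreal (\<Sum>x\<in>E. (a x)\<^sup>2)"
      by (rule sum_ennreal) simp
    have Lb: "L2_set b E \<le> sqrt B"
    proof -
      have "ennreal (\<Sum>x\<in>E. (b x)\<^sup>2) \<le> ennreal B" using fin_le_infsum[of E F b] E bB by auto
      then have "(\<Sum>x\<in>E. (b x)\<^sup>2) \<le> B" using B0 by (simp add: ennreal_le_iff)
      then show ?thesis unfolding L2_set_def by simp
    qed
    have Ld: "L2_set d E \<le> sqrt D"
    proof -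
      have "ennreal (\<Sum>x\<in>E. (d x)\<^sup>2) \<le> ennreal D" using fin_le_infsum[of E F d] E dD by auto
      then have "(\<Sum>x\<in>E. (d x)\<^sup>2) \<le> D" using D0 by (simp add: ennreal_le_iff)
      then show ?thesis unfolding L2_set_def by simp
    qed
    have "L2_set a E \<le> L2_set (\<lambda>x. b x + d x) E"
      by (rule L2_set_mono) (use E ad a0 in auto)
    also have "\<dots> \<le> L2_set b E + L2_set d E" by (rule L2_set_triangle_ineq)
    also have "\<dots> \<le> sqrt B + sqrt D" using Lb Ld by simp
    finally have "L2_set a E \<le> sqrt B + sqrt D" .
    then have "(L2_set a E)\<^sup>2 \<le> (sqrt B + sqrt D)\<^sup>2"
      by (rule power_mono) (simp add: L2_set_def sum_nonneg)
    moreover have "(L2_set a E)\<^sup>2 = (\<Sum>x\<in>E. (a x)\<^sup>2)"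
      unfolding L2_set_def by (simp add: sum_nonneg)
    ultimately show "(\<Sum>x\<in>E. ennreal ((a x)\<^sup>2)) \<le> ennreal ((sqrt B + sqrt D)\<^sup>2)"
      unfolding eq by (simp add: ennreal_leI)
  qed
  finally show ?thesis .
qed

lemma mink_abs:
  fixes a b d :: "'a \<Rightarrow> real"
  assumes a0: "\<And>x. x \<in> F \<Longrightarrow> 0 \<le> a x" and b0: "\<And>x. x \<in> F \<Longrightarrow> 0 \<le> b x"
    and ad: "\<And>x. x \<in> F \<Longrightarrow> \<bar>a x - b x\<bar> \<le> d x"
    and bB: "(\<Sum>\<^sub>\<infinity>x\<in>F. ennreal ((b x)\<^sup>2)) = ennreal B"
    and dD: "(\<Sum>\<^sub>\<infinity>x\<in>F. ennreal ((d x)\<^sup>2)) \<le> ennreal D"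
    and B0: "0 \<le> B" and D0: "0 \<le> D"
  shows "(\<Sum>\<^sub>\<infinity>x\<in>F. ennreal ((a x)\<^sup>2)) = ennreal (enn2real (\<Sum>\<^sub>\<infinity>x\<in>F. ennreal ((a x)\<^sup>2)))"
    and "\<bar>sqrt (enn2real (\<Sum>\<^sub>\<infinity>x\<in>F. ennreal ((a x)\<^sup>2))) - sqrt B\<bar> \<le> sqrt D"
proof -
  define A where "A = (\<Sum>\<^sub>\<infinity>x\<in>F. ennreal ((a x)\<^sup>2))"
  have "A \<le> ennreal ((sqrt B + sqrt D)\<^sup>2)" unfolding A_def
  proof (rule mink_le[OF a0 _ _ dD B0 D0, where b=b])
    fix x assume "x \<in> F" then show "a x \<le> b x + d x" using ad[of x] by linarith
  next
    show "(\<Sum>\<^sub>\<infinity>x\<in>F. ennreal ((b x)\<^sup>2)) \<le> ennreal B" by (rule eq_refl[OF bB])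
  qed auto
  then have Afin: "A \<noteq> top" by (auto simp: top_unique)
  then show "(\<Sum>\<^sub>\<infinity>x\<in>F. ennreal ((a x)\<^sup>2)) = ennreal (enn2real (\<Sum>\<^sub>\<infinity>x\<in>F. ennreal ((a x)\<^sup>2)))"
    unfolding A_def[symmetric] using Afin by (simp add: ennreal_enn2real_if)
  define A' where "A' = enn2real A"
  have A0: "0 \<le> A'" unfolding A'_def by simp
  have AA: "A = ennreal A'" unfolding A'_def using Afin by (simp add: ennreal_enn2real_if)
  have "A \<le> ennreal ((sqrt B + sqrt D)\<^sup>2)" unfolding A_def
  proof (rule mink_le[OF a0 _ _ dD B0 D0, where b=b])
    fix x assume "x \<in> F" then show "a x \<le> b x + d x" using ad[of x] by linarith
  next
    show "(\<Sum>\<^sub>\<infinity>x\<in>F. ennreal ((b x)\<^sup>2)) \<le> ennreal B" by (rule eq_refl[OF bB])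
  qed auto
  then have "A' \<le> (sqrt B + sqrt D)\<^sup>2" unfolding AA by (subst (asm) ennreal_le_iff) auto
  then have "sqrt A' \<le> sqrt ((sqrt B + sqrt D)\<^sup>2)" by (rule real_sqrt_le_mono)
  then have 1: "sqrt A' \<le> sqrt B + sqrt D" using B0 D0 by simp
  have "ennreal B \<le> ennreal ((sqrt A' + sqrt D)\<^sup>2)" unfolding bB[symmetric]
  proof (rule mink_le[OF b0 _ _ dD A0 D0, where b=a])
    fix x assume "x \<in> F" then show "b x \<le> a x + d x" using ad[of x] by linarith
  next
    show "(\<Sum>\<^sub>\<infinity>x\<in>F. ennreal ((a x)\<^sup>2)) \<le> ennreal A'" using AA unfolding A_def by (rule eq_refl)
  qed auto
  then have "B \<le> (sqrt A' + sqrt D)\<^sup>2" by (subst (asm) ennreal_le_iff) auto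
  then have "sqrt B \<le> sqrt ((sqrt A' + sqrt D)\<^sup>2)" by (rule real_sqrt_le_mono)
  then have 2: "sqrt B \<le> sqrt A' + sqrt D" using A0 D0 by simp
  show "\<bar>sqrt (enn2real (\<Sum>\<^sub>\<infinity>x\<in>F. ennreal ((a x)\<^sup>2))) - sqrt B\<bar> \<le> sqrt D"
    using 1 2 unfolding A'_def A_def by linarith
qed



lemma groupoidD:
  assumes "groupoid G r s m i"
  shows grp_cl: "\<And>a. a\<in>G \<Longrightarrow> r a \<in> G \<and> s a \<in> G \<and> i a \<in> G"
    and grp_rs: "\<And>a. a\<in>G \<Longrightarrow> r (r a) = r a \<and> s (r a) = r a \<and> r (s a) = s a \<and> s (s a) = s a"
    and grp_mul: "\<And>a b. a\<in>G \<Longrightarrow> b\<in>G \<Longrightarrow> s a = r b \<Longrightarrow> m a b \<in> G \<and> r (m a b) = r a \<and> s (m a b) = s b"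
    and grp_asc: "\<And>a b c. a\<in>G \<Longrightarrow> b\<in>G \<Longrightarrow> c\<in>G \<Longrightarrow> s a = r b \<Longrightarrow> s b = r c \<Longrightarrow> m (m a b) c = m a (m b c)"
    and grp_un: "\<And>a. a\<in>G \<Longrightarrow> m (r a) a = a \<and> m a (s a) = a"
    and grp_inv: "\<And>a. a\<in>G \<Longrightarrow> r (i a) = s a \<and> s (i a) = r a \<and> m a (i a) = r a \<and> m (i a) a = s a"
  using assms unfolding groupoid_def by blast+

lemma groupoid_inv_inv:
  assumes g: "groupoid G r s m i" and a: "a \<in> G"
  shows "i (i a) = a"
proof -
  define b where "b = i a"
  have b: "b \<in> G" "r b = s a" "s b = r a" "m b a = s a"
    using grp_cl[OF g a] grp_inv[OF g a] unfolding b_def by auto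
  have ib: "i b \<in> G" "s (i b) = r b" "m (i b) b = s b" using grp_cl[OF g b(1)] grp_inv[OF g b(1)] by auto
  have "i b = m (i b) (s (i b))" using grp_un[OF g ib(1)] by simp
  also have "\<dots> = m (i b) (m b a)" using ib(2) b(2,4) by simp
  also have "\<dots> = m (m (i b) b) a" using grp_asc[OF g ib(1) b(1) a] ib(2) b(3) by simp
  also have "\<dots> = m (r a) a" using ib(3) b(3) by simp
  also have "\<dots> = a" using grp_un[OF g a] by simp
  finally show ?thesis unfolding b_def .
qed

lemma etale_s_local:
  assumes tg: "topological_groupoid T r s m i"
    and loc: "\<And>g. g \<in> topspace T \<Longrightarrow> \<exists>U. openin T U \<and> g \<in> U \<and> openin T (r ` U) \<and>
        homeomorphic_map (subtopology T U) (subtopology T (r ` U)) r"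
    and g: "g \<in> topspace T"
  shows "\<exists>V. openin T V \<and> g \<in> V \<and> openin T (s ` V) \<and>
        homeomorphic_map (subtopology T V) (subtopology T (s ` V)) s"
proof -
  have gr: "groupoid (topspace T) r s m i" and ic: "continuous_map T T i"
    using tg unfolding topological_groupoid_def by auto
  have ii: "i (i a) = a" if "a \<in> topspace T" for a using groupoid_inv_inv[OF gr that] .
  have icl: "i a \<in> topspace T" if "a \<in> topspace T" for a using grp_cl[OF gr that] by blast
  have si: "s a = r (i a)" if "a \<in> topspace T" for a using grp_inv[OF gr that] by simp
  obtain U where U: "openin T U" "i g \<in> U" "openin T (r ` U)"
    "homeomorphic_map (subtopology T U) (subtopology T (r ` U)) r" using loc[OF icl[OF g]] by blast
  have Ut: "U \<subseteq> topspace T" using U(1) openin_subset by blast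
  define V where "V = {a \<in> topspace T. i a \<in> U}"
  have Vo: "openin T V" unfolding V_def by (rule openin_continuous_map_preimage[OF ic U(1)])
  have gV: "g \<in> V" unfolding V_def using g U(2) by blast
  have iV: "i ` V = U"
  proof
    show "i ` V \<subseteq> U" unfolding V_def by blast
    show "U \<subseteq> i ` V"
    proof
      fix u assume u: "u \<in> U"
      then have "u \<in> topspace T" using Ut by blast
      then have "i u \<in> V" "i (i u) = u" unfolding V_def using ii icl u by auto
      then show "u \<in> i ` V" by (metis imageI)
    qed
  qed
  have sV: "s ` V = r ` U"
  proof -
    have "s ` V = r ` (i ` V)" unfolding image_image using si unfolding V_def by auto
    then show ?thesis using iV by simp
  qed
  have ihom: "homeomorphic_map T T i"
    unfolding homeomorphic_map_maps homeomorphic_maps_def using ic ii by blast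
  have ihomV: "homeomorphic_map (subtopology T V) (subtopology T U) i"
    by (rule homeomorphic_map_subtopologies[OF ihom]) (use iV Ut in \<open>auto simp: V_def\<close>)
  have "homeomorphic_map (subtopology T V) (subtopology T (r ` U)) (r \<circ> i)"
    by (rule homeomorphic_map_compose[OF ihomV U(4)])
  then have "homeomorphic_map (subtopology T V) (subtopology T (s ` V)) s"
    unfolding sV by (rule homeomorphic_map_eq) (simp add: si V_def)
  then show ?thesis using Vo gV U(3) sV by auto
qed



lemma twistD0:
  assumes "twist TG r s m i TS rS sS mS iS \<iota> \<pi>"
  shows "topological_groupoid TS rS sS mS iS \<and> \<pi> ` topspace TS = topspace TG \<and>
     (\<forall>\<sigma>\<in>topspace TS. \<pi> (rS \<sigma>) = r (\<pi> \<sigma>) \<and> \<pi> (sS \<sigma>) = s (\<pi> \<sigma>)) \<and>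
     (\<forall>a\<in>topspace TS. \<forall>b\<in>topspace TS. sS a = rS b \<longrightarrow> \<pi> (mS a b) = m (\<pi> a) (\<pi> b)) \<and>
     inj_on \<pi> (units (topspace TS) rS) \<and>
     (\<forall>z\<in>circle. \<forall>x\<in>units (topspace TG) r. \<iota> (z, x) \<in> topspace TS \<and> \<pi> (\<iota> (z, x)) = x \<and>
         rS (\<iota> (z, x)) = \<iota> (1, x) \<and> sS (\<iota> (z, x)) = \<iota> (1, x)) \<and>
     (\<forall>z\<in>circle. \<forall>w\<in>circle. \<forall>x\<in>units (topspace TG) r. mS (\<iota> (z, x)) (\<iota> (w, x)) = \<iota> (z * w, x)) \<and>
     \<iota> ` (circle \<times> units (topspace TG) r) = {\<sigma>\<in>topspace TS. \<pi> \<sigma> \<in> units (topspace TG) r}"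
proof -
  have "let G = topspace TG; G0 = units G r; S = topspace TS in
     topological_groupoid TS rS sS mS iS \<and>
     continuous_map TS TG \<pi> \<and> \<pi> ` S = G \<and>
     (\<forall>\<sigma>\<in>S. \<pi> (rS \<sigma>) = r (\<pi> \<sigma>) \<and> \<pi> (sS \<sigma>) = s (\<pi> \<sigma>)) \<and>
     (\<forall>a\<in>S. \<forall>b\<in>S. sS a = rS b \<longrightarrow> \<pi> (mS a b) = m (\<pi> a) (\<pi> b)) \<and>
     inj_on \<pi> (units S rS) \<and>
     (\<forall>z\<in>circle. \<forall>x\<in>G0. \<iota> (z, x) \<in> S \<and> \<pi> (\<iota> (z, x)) = x \<and>
         rS (\<iota> (z, x)) = \<iota> (1, x) \<and> sS (\<iota> (z, x)) = \<iota> (1, x)) \<and>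
     (\<forall>z\<in>circle. \<forall>w\<in>circle. \<forall>x\<in>G0. mS (\<iota> (z, x)) (\<iota> (w, x)) = \<iota> (z * w, x)) \<and>
     inj_on \<iota> (circle \<times> G0) \<and>
     \<iota> ` (circle \<times> G0) = {\<sigma>\<in>S. \<pi> \<sigma> \<in> G0}"
    using assms unfolding twist_def Let_def by (elim conjE) (intro conjI; assumption)
  then show ?thesis unfolding Let_def by (elim conjE) (intro conjI; assumption)
qed

lemma twistD:
  assumes "twist TG r s m i TS rS sS mS iS \<iota> \<pi>"
  shows tw_grp: "groupoid (topspace TS) rS sS mS iS"
    and tw_piS: "\<pi> ` topspace TS = topspace TG"
    and tw_pirs: "\<And>\<sigma>. \<sigma>\<in>topspace TS \<Longrightarrow> \<pi> (rS \<sigma>) = r (\<pi> \<sigma>) \<and> \<pi> (sS \<sigma>) = s (\<pi> \<sigma>)"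
    and tw_pim: "\<And>a b. a\<in>topspace TS \<Longrightarrow> b\<in>topspace TS \<Longrightarrow> sS a = rS b \<Longrightarrow> \<pi> (mS a b) = m (\<pi> a) (\<pi> b)"
    and tw_inj: "inj_on \<pi> (units (topspace TS) rS)"
    and tw_iota: "\<And>z x. z\<in>circle \<Longrightarrow> x\<in>units (topspace TG) r \<Longrightarrow> \<iota> (z, x) \<in> topspace TS \<and> \<pi> (\<iota> (z, x)) = x \<and>
         rS (\<iota> (z, x)) = \<iota> (1, x) \<and> sS (\<iota> (z, x)) = \<iota> (1, x)"
    and tw_iotam: "\<And>z w x. z\<in>circle \<Longrightarrow> w\<in>circle \<Longrightarrow> x\<in>units (topspace TG) r \<Longrightarrow> mS (\<iota> (z, x)) (\<iota> (w, x)) = \<iota> (z * w, x)"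
    and tw_ex: "\<iota> ` (circle \<times> units (topspace TG) r) = {\<sigma>\<in>topspace TS. \<pi> \<sigma> \<in> units (topspace TG) r}"
  using twistD0[OF assms] unfolding topological_groupoid_def by auto

lemma circle_1: "1 \<in> circle" unfolding circle_def by simp
lemma circle_mult: "w \<in> circle \<Longrightarrow> v \<in> circle \<Longrightarrow> w * v \<in> circle"
  unfolding circle_def by (simp add: norm_mult)
lemma circle_cnj: "w \<in> circle \<Longrightarrow> cnj w \<in> circle"
  unfolding circle_def by simp
lemma circle_cnj_mult: "w \<in> circle \<Longrightarrow> cnj w * w = 1"
proof -
  assume "w \<in> circle"
  then have "norm w = 1" unfolding circle_def by simp
  then show "cnj w * w = 1" using complex_norm_square[of w] by (simp add: mult.commute)
qed
lemma circle_norm: "w \<in> circle \<Longrightarrow> cmod w = 1" unfolding circle_def by simp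

locale tw =
  fixes TG :: "'g topology" and r s :: "'g \<Rightarrow> 'g" and m :: "'g \<Rightarrow> 'g \<Rightarrow> 'g" and i :: "'g \<Rightarrow> 'g"
    and TS :: "'s topology" and rS sS :: "'s \<Rightarrow> 's" and mS :: "'s \<Rightarrow> 's \<Rightarrow> 's" and iS :: "'s \<Rightarrow> 's"
    and \<iota> :: "complex \<times> 'g \<Rightarrow> 's" and \<pi> :: "'s \<Rightarrow> 'g"
  assumes gG: "groupoid (topspace TG) r s m i"
    and tw: "twist TG r s m i TS rS sS mS iS \<iota> \<pi>"
begin

abbreviation "S \<equiv> topspace TS"
abbreviation "G \<equiv> topspace TG"
abbreviation "G0 \<equiv> units G r"
abbreviation "R \<equiv> Lrel S r mS \<iota> \<pi>"
abbreviation "ta \<equiv> tact r mS \<iota> \<pi>"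

lemmas gS = tw_grp[OF tw]

lemma piG: "\<sigma> \<in> S \<Longrightarrow> \<pi> \<sigma> \<in> G" using tw_piS[OF tw] by blast

lemma rG0: "\<gamma> \<in> G \<Longrightarrow> r \<gamma> \<in> G0" unfolding units_def by blast
lemma sG0: "\<gamma> \<in> G \<Longrightarrow> s \<gamma> \<in> G0"
proof -
  assume g: "\<gamma> \<in> G"
  then have "s \<gamma> \<in> G" "r (s \<gamma>) = s \<gamma>" using grp_cl[OF gG g] grp_rs[OF gG g] by auto
  then show ?thesis unfolding units_def by (metis imageI)
qed

lemma rS_eq: assumes "\<sigma> \<in> S" shows "rS \<sigma> = \<iota> (1, r (\<pi> \<sigma>))"
proof -
  define x where "x = r (\<pi> \<sigma>)"
  have x: "x \<in> G0" unfolding x_def by (rule rG0[OF piG[OF assms]])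
  have io: "\<iota> (1, x) \<in> S" "\<pi> (\<iota> (1, x)) = x" "rS (\<iota> (1, x)) = \<iota> (1, x)"
    using tw_iota[OF tw circle_1 x] by auto
  have "\<iota> (1, x) \<in> units S rS" unfolding units_def using io by (metis imageI)
  moreover have "rS \<sigma> \<in> units S rS" unfolding units_def using assms by blast
  moreover have "\<pi> (rS \<sigma>) = \<pi> (\<iota> (1, x))" using tw_pirs[OF tw assms] io unfolding x_def by simp
  ultimately show ?thesis unfolding x_def[symmetric] using tw_inj[OF tw] by (meson inj_onD)
qed

lemma sS_eq: assumes "\<sigma> \<in> S" shows "sS \<sigma> = \<iota> (1, s (\<pi> \<sigma>))"
proof -
  define x where "x = s (\<pi> \<sigma>)"
  have x: "x \<in> G0" unfolding x_def by (rule sG0[OF piG[OF assms]])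
  have io: "\<iota> (1, x) \<in> S" "\<pi> (\<iota> (1, x)) = x" "rS (\<iota> (1, x)) = \<iota> (1, x)"
    using tw_iota[OF tw circle_1 x] by auto
  have "\<iota> (1, x) \<in> units S rS" unfolding units_def using io by (metis imageI)
  moreover have "sS \<sigma> \<in> units S rS"
  proof -
    have "sS \<sigma> \<in> S" "rS (sS \<sigma>) = sS \<sigma>" using grp_cl[OF gS assms] grp_rs[OF gS assms] by auto
    then show ?thesis unfolding units_def by (metis imageI)
  qed
  moreover have "\<pi> (sS \<sigma>) = \<pi> (\<iota> (1, x))" using tw_pirs[OF tw assms] io unfolding x_def by simp
  ultimately show ?thesis unfolding x_def[symmetric] using tw_inj[OF tw] by (meson inj_onD)
qed

lemma ta1: assumes w: "w \<in> circle" and \<sigma>: "\<sigma> \<in> S"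
  shows "ta w \<sigma> \<in> S" "\<pi> (ta w \<sigma>) = \<pi> \<sigma>"
proof -
  define x where "x = r (\<pi> \<sigma>)"
  have x: "x \<in> G0" unfolding x_def by (rule rG0[OF piG[OF \<sigma>]])
  have io: "\<iota> (w, x) \<in> S" "\<pi> (\<iota> (w, x)) = x" "sS (\<iota> (w, x)) = \<iota> (1, x)"
    using tw_iota[OF tw w x] by auto
  have comp: "sS (\<iota> (w, x)) = rS \<sigma>" using io(3) rS_eq[OF \<sigma>] unfolding x_def by simp
  show "ta w \<sigma> \<in> S" unfolding tact_def x_def[symmetric] using grp_mul[OF gS io(1) \<sigma> comp] by blast
  have "\<pi> (ta w \<sigma>) = m x (\<pi> \<sigma>)" unfolding tact_def x_def[symmetric] using tw_pim[OF tw io(1) \<sigma> comp] io(2) by simp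
  also have "\<dots> = \<pi> \<sigma>" unfolding x_def using grp_un[OF gG piG[OF \<sigma>]] by simp
  finally show "\<pi> (ta w \<sigma>) = \<pi> \<sigma>" .
qed

lemma ta_one: assumes \<sigma>: "\<sigma> \<in> S" shows "ta 1 \<sigma> = \<sigma>"
  unfolding tact_def using rS_eq[OF \<sigma>] grp_un[OF gS \<sigma>] by simp

lemma ta_comp: assumes w: "w \<in> circle" and v: "v \<in> circle" and \<sigma>: "\<sigma> \<in> S"
  shows "ta w (ta v \<sigma>) = ta (w * v) \<sigma>"
proof -
  define x where "x = r (\<pi> \<sigma>)"
  have x: "x \<in> G0" unfolding x_def by (rule rG0[OF piG[OF \<sigma>]])
  have iw: "\<iota> (w, x) \<in> S" "sS (\<iota> (w, x)) = \<iota> (1, x)" using tw_iota[OF tw w x] by auto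
  have iv: "\<iota> (v, x) \<in> S" "sS (\<iota> (v, x)) = \<iota> (1, x)" "rS (\<iota> (v, x)) = \<iota> (1, x)" using tw_iota[OF tw v x] by auto
  have rs: "rS \<sigma> = \<iota> (1, x)" using rS_eq[OF \<sigma>] unfolding x_def .
  have "ta w (ta v \<sigma>) = mS (\<iota> (w, x)) (mS (\<iota> (v, x)) \<sigma>)"
    unfolding tact_def[of r mS \<iota> \<pi> w] ta1(2)[OF v \<sigma>] unfolding tact_def x_def ..
  also have "\<dots> = mS (mS (\<iota> (w, x)) (\<iota> (v, x))) \<sigma>"
    using grp_asc[OF gS iw(1) iv(1) \<sigma>] iw(2) iv(2,3) rs by simp
  also have "\<dots> = mS (\<iota> (w * v, x)) \<sigma>" using tw_iotam[OF tw w v x] by simp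
  finally show ?thesis unfolding tact_def x_def .
qed

lemma Lrel_iff: "((p1, p2) \<in> R) \<longleftrightarrow> snd p1 \<in> S \<and> snd p2 \<in> S \<and>
   (\<exists>w\<in>circle. fst p1 = cnj w * fst p2 \<and> snd p1 = ta w (snd p2))"
  unfolding Lrel_def by (cases p1, cases p2) auto

lemma equivR: "equiv (UNIV \<times> S) R"
proof (rule equivI)
  show "R \<subseteq> (UNIV \<times> S) \<times> (UNIV \<times> S)" unfolding Lrel_def by auto
  show "refl_on (UNIV \<times> S) R"
  proof (rule refl_onI)
    fix p :: "complex \<times> 's" assume "p \<in> UNIV \<times> S"
    then show "(p, p) \<in> R" unfolding Lrel_iff using circle_1 ta_one by (intro conjI bexI[of _ 1]) auto
  qed
  show "sym R"
  proof (rule symI)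
    fix p1 p2 :: "complex \<times> 's" assume "(p1, p2) \<in> R"
    then obtain w where w: "w \<in> circle" "fst p1 = cnj w * fst p2" "snd p1 = ta w (snd p2)"
      "snd p1 \<in> S" "snd p2 \<in> S" unfolding Lrel_iff by blast
    have "fst p2 = cnj (cnj w) * fst p1" using w(2) circle_cnj_mult[OF w(1)]
      by (simp add: mult.assoc[symmetric] mult.commute)
    moreover have "snd p2 = ta (cnj w) (snd p1)"
      using w(3) ta_comp[OF circle_cnj[OF w(1)] w(1) w(5)] circle_cnj_mult[OF w(1)] ta_one[OF w(5)] by simp
    ultimately show "(p2, p1) \<in> R" unfolding Lrel_iff using w circle_cnj by blast
  qed
  show "trans R"
  proof (rule transI)
    fix p1 p2 p3 :: "complex \<times> 's" assume "(p1, p2) \<in> R" "(p2, p3) \<in> R"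
    then obtain w v where w: "w \<in> circle" "fst p1 = cnj w * fst p2" "snd p1 = ta w (snd p2)"
      "snd p1 \<in> S" "snd p2 \<in> S" and v: "v \<in> circle" "fst p2 = cnj v * fst p3" "snd p2 = ta v (snd p3)"
      "snd p3 \<in> S" unfolding Lrel_iff by blast
    have "fst p1 = cnj (w * v) * fst p3" using w(2) v(2) by (simp add: mult.assoc)
    moreover have "snd p1 = ta (w * v) (snd p3)" using w(3) v(3) ta_comp[OF w(1) v(1) v(4)] by simp
    ultimately show "(p1, p3) \<in> R" unfolding Lrel_iff using w v circle_mult by blast
  qed
qed

end



context tw begin

abbreviation "XX \<equiv> prod_topology (euclidean :: complex topology) TS"
abbreviation "AA \<equiv> topspace XX"
abbreviation "LTop \<equiv> Ltop TS r mS \<iota> \<pi>"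

lemma AA_eq: "AA = UNIV \<times> S" by simp

lemma equivA: "equiv AA R" using equivR by simp

lemma istop_int:
  fixes U1 U2 :: "(complex \<times> 's) set set"
  assumes U1: "U1 \<subseteq> AA // R \<and> openin XX (\<Union>U1)" and U2: "U2 \<subseteq> AA // R \<and> openin XX (\<Union>U2)"
  shows "U1 \<inter> U2 \<subseteq> AA // R \<and> openin XX (\<Union>(U1 \<inter> U2))"
proof -
  have "\<Union>(U1 \<inter> U2) = \<Union>U1 \<inter> \<Union>U2"
  proof
    show "\<Union>(U1 \<inter> U2) \<subseteq> \<Union>U1 \<inter> \<Union>U2" by blast
    show "\<Union>U1 \<inter> \<Union>U2 \<subseteq> \<Union>(U1 \<inter> U2)"
    proof
      fix x assume "x \<in> \<Union>U1 \<inter> \<Union>U2"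
      then obtain c1 c2 where c: "c1 \<in> U1" "c2 \<in> U2" "x \<in> c1" "x \<in> c2" by blast
      then have "c1 = c2 \<or> c1 \<inter> c2 = {}" using quotient_disj[OF equivA] U1 U2 by blast
      then have "c1 = c2" using c by blast
      then show "x \<in> \<Union>(U1 \<inter> U2)" using c by blast
    qed
  qed
  then show ?thesis using U1 U2 by (auto intro: openin_Int)
qed

lemma istop_un:
  fixes K :: "(complex \<times> 's) set set set"
  assumes K: "\<forall>U\<in>K. U \<subseteq> AA // R \<and> openin XX (\<Union>U)"
  shows "\<Union>K \<subseteq> AA // R \<and> openin XX (\<Union>(\<Union>K))"
proof -
  have e: "\<Union>(\<Union>K) = \<Union>(Union ` K)" by blast
  have "openin XX (\<Union>(Union ` K))" by (rule openin_Union) (use K in blast)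
  then show ?thesis using K e by auto
qed

lemma istop: "istopology (\<lambda>U. U \<subseteq> AA // R \<and> openin XX (\<Union>U))"
  unfolding istopology_def
proof (rule conjI)
  show "\<forall>U1 U2. U1 \<subseteq> AA // R \<and> openin XX (\<Union>U1) \<longrightarrow> U2 \<subseteq> AA // R \<and> openin XX (\<Union>U2) \<longrightarrow>
     U1 \<inter> U2 \<subseteq> AA // R \<and> openin XX (\<Union>(U1 \<inter> U2))"
    using istop_int by blast
  show "\<forall>K. (\<forall>U\<in>K. U \<subseteq> AA // R \<and> openin XX (\<Union>U)) \<longrightarrow> \<Union>K \<subseteq> AA // R \<and> openin XX (\<Union>(\<Union>K))"
    using istop_un by blast
qed

lemma openin_LT: "openin LTop U \<longleftrightarrow> U \<subseteq> AA // R \<and> openin XX (\<Union>U)"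
  unfolding Ltop_def quot_topology_def using istop by simp

lemma topspace_LT: "topspace LTop = AA // R"
proof
  show "topspace LTop \<subseteq> AA // R" unfolding topspace_def openin_LT by blast
  have "openin LTop (AA // R)" unfolding openin_LT Union_quotient[OF equivA] using openin_topspace[of XX] by blast
  then show "AA // R \<subseteq> topspace LTop" by (rule openin_subset)
qed

lemma class_refl: "\<sigma>0 \<in> S \<Longrightarrow> (z0, \<sigma>0) \<in> R``{(z0, \<sigma>0)}"
  using equivR unfolding equiv_def refl_on_def by blast

lemma class_mod: assumes "\<sigma>0 \<in> S" "p \<in> R``{(z0, \<sigma>0)}" shows "cmod (fst p) = cmod z0"
proof -
  have "((z0, \<sigma>0), p) \<in> R" using assms(2) by blast
  then obtain w where "w \<in> circle" "z0 = cnj w * fst p" unfolding Lrel_iff by auto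
  then show ?thesis by (simp add: norm_mult circle_norm)
qed

lemma Labs_class: assumes "\<sigma>0 \<in> S" shows "Labs (R``{(z0, \<sigma>0)}) = cmod z0"
proof -
  have "\<exists>p. p \<in> R``{(z0, \<sigma>0)}" using class_refl[OF assms] by blast
  then have "(SOME p. p \<in> R``{(z0, \<sigma>0)}) \<in> R``{(z0, \<sigma>0)}" by (rule someI_ex)
  then show ?thesis unfolding Labs_def using class_mod[OF assms] by blast
qed

lemma Labs_cont: "continuous_map LTop euclidean Labs"
  unfolding continuous_map_def
proof (intro conjI allI impI)
  show "Labs \<in> topspace LTop \<rightarrow> topspace euclidean" by simp
  fix V :: "real set" assume V: "openin euclidean V"
  define Q where "Q = {c \<in> topspace LTop. Labs c \<in> V}"
  have UQ: "\<Union>Q = {p \<in> AA. cmod (fst p) \<in> V}"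
  proof
    show "\<Union>Q \<subseteq> {p \<in> AA. cmod (fst p) \<in> V}"
    proof
      fix p assume "p \<in> \<Union>Q"
      then obtain c where c: "c \<in> AA // R" "Labs c \<in> V" "p \<in> c" unfolding Q_def topspace_LT by blast
      then obtain x0 where x0: "c = R``{x0}" "x0 \<in> AA" unfolding quotient_def by blast
      obtain z0 \<sigma>0 where x0e: "x0 = (z0, \<sigma>0)" by fastforce
      have s0: "\<sigma>0 \<in> S" using x0 x0e by simp
      have "p \<in> AA" using c(3) x0 equivA unfolding equiv_def by blast
      moreover have "cmod (fst p) = Labs c" using class_mod[OF s0] Labs_class[OF s0] c(3) x0 x0e by simp
      ultimately show "p \<in> {p \<in> AA. cmod (fst p) \<in> V}" using c(2) by simp
    qed
    show "{p \<in> AA. cmod (fst p) \<in> V} \<subseteq> \<Union>Q"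
    proof
      fix p assume p: "p \<in> {p \<in> AA. cmod (fst p) \<in> V}"
      obtain z0 \<sigma>0 where pe: "p = (z0, \<sigma>0)" by fastforce
      have s0: "\<sigma>0 \<in> S" using p pe by simp
      have "R``{p} \<in> AA // R" using p by (blast intro: quotientI)
      moreover have "Labs (R``{p}) \<in> V" using Labs_class[OF s0] p pe by simp
      moreover have "p \<in> R``{p}" using class_refl[OF s0] pe by simp
      ultimately show "p \<in> \<Union>Q" unfolding Q_def topspace_LT by blast
    qed
  qed
  have "openin XX {p \<in> AA. cmod (fst p) \<in> V}"
  proof (rule openin_continuous_map_preimage[OF _ V])
    show "continuous_map XX euclidean (\<lambda>p. cmod (fst p))"
      by (intro continuous_map_norm) (rule continuous_map_fst)
  qed
  then show "openin LTop {c \<in> topspace LTop. Labs c \<in> V}"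
    unfolding openin_LT using UQ Q_def topspace_LT by auto
qed

lemma sec_class:
  assumes f: "cont_section TG TS r mS \<iota> \<pi> f" and g: "\<gamma> \<in> G"
  shows "\<exists>z \<sigma>. \<sigma> \<in> S \<and> \<pi> \<sigma> = \<gamma> \<and> f \<gamma> = R``{(z, \<sigma>)}"
proof -
  have "f \<gamma> \<in> topspace LTop" using f g unfolding cont_section_def continuous_map_def by blast
  then have "f \<gamma> \<in> AA // R" unfolding topspace_LT .
  then obtain x0 where x0: "f \<gamma> = R``{x0}" "x0 \<in> AA" unfolding quotient_def by blast
  obtain z0 \<sigma>0 where x0e: "x0 = (z0, \<sigma>0)" by fastforce
  have s0: "\<sigma>0 \<in> S" using x0 x0e by simp
  have "(z0, \<sigma>0) \<in> f \<gamma>" using class_refl[OF s0] x0 x0e by simp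
  then have "\<pi> \<sigma>0 = \<gamma>" using f g unfolding cont_section_def by fastforce
  then show ?thesis using s0 x0 x0e by blast
qed

lemma Labs_sec_cont:
  assumes f: "cont_section TG TS r mS \<iota> \<pi> f"
  shows "continuous_map TG euclidean (\<lambda>\<gamma>. Labs (f \<gamma>))"
proof -
  have "continuous_map TG LTop f" using f unfolding cont_section_def by blast
  then show ?thesis using continuous_map_compose[OF _ Labs_cont] by (simp add: o_def)
qed

lemma same_fibre:
  assumes s1: "\<sigma>1 \<in> S" and s2: "\<sigma>2 \<in> S" and eq: "\<pi> \<sigma>1 = \<pi> \<sigma>2"
  shows "\<exists>w\<in>circle. \<sigma>2 = ta w \<sigma>1"
proof -
  have is1: "iS \<sigma>1 \<in> S" "rS (iS \<sigma>1) = sS \<sigma>1" "sS (iS \<sigma>1) = rS \<sigma>1" "mS \<sigma>1 (iS \<sigma>1) = rS \<sigma>1"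
    "mS (iS \<sigma>1) \<sigma>1 = sS \<sigma>1"
    using grp_cl[OF gS s1] grp_inv[OF gS s1] by auto
  have ss: "sS \<sigma>2 = sS \<sigma>1" using sS_eq[OF s1] sS_eq[OF s2] eq by simp
  have comp1: "sS \<sigma>2 = rS (iS \<sigma>1)" using ss is1 by simp
  have comp0: "sS \<sigma>1 = rS (iS \<sigma>1)" using is1 by simp
  define \<tau> where "\<tau> = mS \<sigma>2 (iS \<sigma>1)"
  have tS: "\<tau> \<in> S" unfolding \<tau>_def using grp_mul[OF gS s2 is1(1) comp1] by blast
  have "\<pi> \<tau> = m (\<pi> \<sigma>2) (\<pi> (iS \<sigma>1))" unfolding \<tau>_def by (rule tw_pim[OF tw s2 is1(1) comp1])
  also have "\<dots> = m (\<pi> \<sigma>1) (\<pi> (iS \<sigma>1))" using eq by simp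
  also have "\<dots> = \<pi> (mS \<sigma>1 (iS \<sigma>1))" by (rule tw_pim[OF tw s1 is1(1) comp0, symmetric])
  also have "\<dots> = r (\<pi> \<sigma>1)" using is1(4) tw_pirs[OF tw s1] by simp
  finally have pt: "\<pi> \<tau> = r (\<pi> \<sigma>1)" .
  have "\<tau> \<in> \<iota> ` (circle \<times> G0)" unfolding tw_ex[OF tw] using tS pt rG0[OF piG[OF s1]] by simp
  then obtain w x where wx: "w \<in> circle" "x \<in> G0" "\<tau> = \<iota> (w, x)" by blast
  have "x = r (\<pi> \<sigma>1)" using tw_iota[OF tw wx(1,2)] wx(3) pt by simp
  then have tau: "\<tau> = \<iota> (w, r (\<pi> \<sigma>1))" using wx(3) by simp
  have "ta w \<sigma>1 = mS \<tau> \<sigma>1" unfolding tact_def tau ..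
  also have "\<dots> = mS \<sigma>2 (mS (iS \<sigma>1) \<sigma>1)" unfolding \<tau>_def
    by (rule grp_asc[OF gS s2 is1(1) s1 comp1 is1(3)])
  also have "\<dots> = mS \<sigma>2 (sS \<sigma>2)" using is1(5) ss by simp
  also have "\<dots> = \<sigma>2" using grp_un[OF gS s2] by simp
  finally show ?thesis using wx(1) by metis
qed

lemma Ldist_bound:
  assumes f: "cont_section TG TS r mS \<iota> \<pi> f" and g: "cont_section TG TS r mS \<iota> \<pi> g"
    and \<gamma>: "\<gamma> \<in> G"
  shows "\<bar>Labs (f \<gamma>) - Labs (g \<gamma>)\<bar> \<le> Ldist (f \<gamma>) (g \<gamma>)"
proof -
  obtain z1 \<sigma>1 where c1: "\<sigma>1 \<in> S" "\<pi> \<sigma>1 = \<gamma>" "f \<gamma> = R``{(z1, \<sigma>1)}" using sec_class[OF f \<gamma>] by blast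
  obtain z2 \<sigma>2 where c2: "\<sigma>2 \<in> S" "\<pi> \<sigma>2 = \<gamma>" "g \<gamma> = R``{(z2, \<sigma>2)}" using sec_class[OF g \<gamma>] by blast
  obtain w where w: "w \<in> circle" "\<sigma>2 = ta w \<sigma>1" using same_fibre[OF c1(1) c2(1)] c1(2) c2(2) by auto
  have "((z2, \<sigma>2), (w * z2, \<sigma>1)) \<in> R"
    unfolding Lrel_iff using c1(1) c2(1) w circle_cnj_mult[OF w(1)] by (auto simp: mult.assoc[symmetric])
  then have m2: "(w * z2, \<sigma>1) \<in> g \<gamma>" using c2(3) by simp
  have m1: "(z1, \<sigma>1) \<in> f \<gamma>" using c1(3) class_refl[OF c1(1)] by simp
  have "\<exists>d. \<exists>\<sigma> y1 y2. (y1, \<sigma>) \<in> f \<gamma> \<and> (y2, \<sigma>) \<in> g \<gamma> \<and> d = cmod (y1 - y2)"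
    using m1 m2 by blast
  then have "\<exists>\<sigma> y1 y2. (y1, \<sigma>) \<in> f \<gamma> \<and> (y2, \<sigma>) \<in> g \<gamma> \<and> Ldist (f \<gamma>) (g \<gamma>) = cmod (y1 - y2)"
    unfolding Ldist_def by (rule someI_ex)
  then obtain \<sigma> y1 y2 where y: "(y1, \<sigma>) \<in> f \<gamma>" "(y2, \<sigma>) \<in> g \<gamma>" "Ldist (f \<gamma>) (g \<gamma>) = cmod (y1 - y2)"
    by blast
  have "cmod y1 = Labs (f \<gamma>)" using class_mod[OF c1(1)] Labs_class[OF c1(1)] y(1) c1(3) by fastforce
  moreover have "cmod y2 = Labs (g \<gamma>)" using class_mod[OF c2(1)] Labs_class[OF c2(1)] y(2) c2(3) by fastforce
  ultimately show ?thesis using y(3) norm_triangle_ineq3[of y1 y2] by simp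
qed

end



lemma fib_sum_conv:
  fixes b :: "'a \<Rightarrow> real"
  assumes fin: "finite {\<gamma>\<in>A. p \<gamma> = y \<and> \<gamma> \<in> K}" and supp: "\<And>\<gamma>. \<gamma>\<in>A \<Longrightarrow> b \<gamma> \<noteq> 0 \<Longrightarrow> \<gamma>\<in>K"
  shows "(\<Sum>\<^sub>\<infinity>\<gamma>\<in>{\<gamma>\<in>A. p \<gamma> = y}. ennreal ((b \<gamma>)\<^sup>2)) = ennreal (\<Sum>\<gamma>\<in>{\<gamma>\<in>A. p \<gamma> = y \<and> \<gamma> \<in> K}. (b \<gamma>)\<^sup>2)"
proof -
  have "(\<Sum>\<^sub>\<infinity>\<gamma>\<in>{\<gamma>\<in>A. p \<gamma> = y}. ennreal ((b \<gamma>)\<^sup>2)) = (\<Sum>\<^sub>\<infinity>\<gamma>\<in>{\<gamma>\<in>A. p \<gamma> = y \<and> \<gamma> \<in> K}. ennreal ((b \<gamma>)\<^sup>2))"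
    by (rule infsum_cong_neutral) (use supp in auto)
  also have "\<dots> = (\<Sum>\<gamma>\<in>{\<gamma>\<in>A. p \<gamma> = y \<and> \<gamma> \<in> K}. ennreal ((b \<gamma>)\<^sup>2))" using fin by simp
  also have "\<dots> = ennreal (\<Sum>\<gamma>\<in>{\<gamma>\<in>A. p \<gamma> = y \<and> \<gamma> \<in> K}. (b \<gamma>)\<^sup>2)" by (rule sum_ennreal) simp
  finally show ?thesis .
qed

lemma fibre_pack:
  fixes X :: "'a topology" and p :: "'a \<Rightarrow> 'a" and b :: "'a \<Rightarrow> real"
  assumes H: "Hausdorff_space X" and pc: "continuous_map X X p"
    and loc: "\<And>g. g \<in> topspace X \<Longrightarrow> \<exists>U. openin X U \<and> g \<in> U \<and> openin X (p ` U) \<and>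
       homeomorphic_map (subtopology X U) (subtopology X (p ` U)) p"
    and bc: "continuous_map X euclidean b" and K: "compactin X K"
    and supp: "\<And>\<gamma>. \<gamma> \<in> topspace X \<Longrightarrow> b \<gamma> \<noteq> 0 \<Longrightarrow> \<gamma> \<in> K"
  shows "continuous_map X euclidean (\<lambda>y. \<Sum>\<gamma>\<in>{\<gamma>\<in>topspace X. p \<gamma> = y \<and> \<gamma> \<in> K}. (b \<gamma>)\<^sup>2)"
    and "(\<Sum>\<^sub>\<infinity>\<gamma>\<in>{\<gamma>\<in>topspace X. p \<gamma> = y}. ennreal ((b \<gamma>)\<^sup>2)) = ennreal (\<Sum>\<gamma>\<in>{\<gamma>\<in>topspace X. p \<gamma> = y \<and> \<gamma> \<in> K}. (b \<gamma>)\<^sup>2)"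
proof -
  show "continuous_map X euclidean (\<lambda>y. \<Sum>\<gamma>\<in>{\<gamma>\<in>topspace X. p \<gamma> = y \<and> \<gamma> \<in> K}. (b \<gamma>)\<^sup>2)"
    by (rule fibre_cont[OF H pc loc bc K supp])
  have "finite {\<gamma>\<in>topspace X. p \<gamma> = y \<and> \<gamma> \<in> K}"
  proof (rule fibre_finite[OF _ K])
    fix g assume g: "g \<in> topspace X"
    then obtain U where U: "openin X U" "g \<in> U" "homeomorphic_map (subtopology X U) (subtopology X (p ` U)) p"
      using loc by blast
    have "inj_on p (topspace X \<inter> U)" using U(3) unfolding homeomorphic_eq_everything_map by simp
    moreover have "topspace X \<inter> U = U" using U(1) openin_subset by blast
    ultimately show "\<exists>U. openin X U \<and> g \<in> U \<and> inj_on p U" using U by auto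
  qed
  then show "(\<Sum>\<^sub>\<infinity>\<gamma>\<in>{\<gamma>\<in>topspace X. p \<gamma> = y}. ennreal ((b \<gamma>)\<^sup>2)) = ennreal (\<Sum>\<gamma>\<in>{\<gamma>\<in>topspace X. p \<gamma> = y \<and> \<gamma> \<in> K}. (b \<gamma>)\<^sup>2)"
    by (rule fib_sum_conv) (rule supp)
qed

lemma max_diff_le:
  fixes x1 y1 x2 y2 e :: real
  assumes "\<bar>x1 - x2\<bar> \<le> e" "\<bar>y1 - y2\<bar> \<le> e"
  shows "\<bar>max x1 y1 - max x2 y2\<bar> \<le> e"
  using assms by (auto simp: max_def abs_le_iff)

lemma sqrt_max: "sqrt (max x y) = max (sqrt x) (sqrt y)"
  by (auto simp: max_def)

lemma ennreal_max_eq: "0 \<le> x \<Longrightarrow> 0 \<le> y \<Longrightarrow> max (ennreal x) (ennreal y) = ennreal (max x y)"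
  by (auto simp: max_def)

theorem lemma3p2:
  fixes TG :: "'g topology" and r s :: "'g \<Rightarrow> 'g" and m :: "'g \<Rightarrow> 'g \<Rightarrow> 'g" and i :: "'g \<Rightarrow> 'g"
    and TS :: "'s topology" and rS sS :: "'s \<Rightarrow> 's" and mS :: "'s \<Rightarrow> 's \<Rightarrow> 's" and iS :: "'s \<Rightarrow> 's"
    and \<iota> :: "complex \<times> 'g \<Rightarrow> 's" and \<pi> :: "'s \<Rightarrow> 'g"
    and f :: "'g \<Rightarrow> (complex \<times> 's) set"
  assumes "etale_groupoid TG r s m i"
    and "locally_compact_space TG" and "Hausdorff_space TG"
    and "twist TG r s m i TS rS sS mS iS \<iota> \<pi>"
    and "f \<in> ell2 TG TS r s mS \<iota> \<pi>"
  shows "continuous_map (subtopology TG (units (topspace TG) r)) euclidean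
     (\<lambda>x. sqrt (enn2real (max
        (\<Sum>\<^sub>\<infinity>\<gamma>\<in>{\<gamma>\<in>topspace TG. s \<gamma> = x}. ennreal ((Labs (f \<gamma>))\<^sup>2))
        (\<Sum>\<^sub>\<infinity>\<gamma>\<in>{\<gamma>\<in>topspace TG. r \<gamma> = x}. ennreal ((Labs (f \<gamma>))\<^sup>2)))))"
proof -
  have tg: "topological_groupoid TG r s m i"
    and rloc: "\<And>g. g \<in> topspace TG \<Longrightarrow> \<exists>U. openin TG U \<and> g \<in> U \<and> openin TG (r ` U) \<and>
        homeomorphic_map (subtopology TG U) (subtopology TG (r ` U)) r"
    using assms(1) unfolding etale_groupoid_def by blast+
  have gG: "groupoid (topspace TG) r s m i" and rc: "continuous_map TG TG r" and sc: "continuous_map TG TG s"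
    using tg unfolding topological_groupoid_def by blast+
  have sloc: "\<And>g. g \<in> topspace TG \<Longrightarrow> \<exists>U. openin TG U \<and> g \<in> U \<and> openin TG (s ` U) \<and>
        homeomorphic_map (subtopology TG U) (subtopology TG (s ` U)) s"
    by (rule etale_s_local[OF tg rloc])
  interpret tw TG r s m i TS rS sS mS iS \<iota> \<pi>
    by unfold_locales (rule gG, rule assms(4))
  obtain fn where fsec: "cont_section TG TS r mS \<iota> \<pi> f"
    and fnCc: "\<And>n. fn n \<in> Cc TG TS r mS \<iota> \<pi>"
    and lim: "((\<lambda>n. l2sq (topspace TG) r s (\<lambda>\<gamma>. Ldist (f \<gamma>) (fn n \<gamma>))) \<longlongrightarrow> 0) sequentially"
    using assms(5) unfolding ell2_def by blast
  define b where "b n \<gamma> = Labs (fn n \<gamma>)" for n \<gamma>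
  define d where "d n \<gamma> = Ldist (f \<gamma>) (fn n \<gamma>)" for n \<gamma>
  define K where "K n = TG closure_of {\<gamma>\<in>topspace TG. b n \<gamma> \<noteq> 0}" for n
  have fnsec: "cont_section TG TS r mS \<iota> \<pi> (fn n)" for n using fnCc[of n] unfolding Cc_def by blast
  have Kc: "compactin TG (K n)" for n using fnCc[of n] unfolding Cc_def K_def b_def by blast
  have supp: "\<gamma> \<in> K n" if "\<gamma> \<in> topspace TG" "b n \<gamma> \<noteq> 0" for n \<gamma>
    using closure_of_subset[of "{\<gamma>\<in>topspace TG. b n \<gamma> \<noteq> 0}" TG] that unfolding K_def by blast
  have bc: "continuous_map TG euclidean (b n)" for n
    unfolding b_def by (rule Labs_sec_cont[OF fnsec])
  define Hr where "Hr n y = (\<Sum>\<gamma>\<in>{\<gamma>\<in>topspace TG. r \<gamma> = y \<and> \<gamma> \<in> K n}. (b n \<gamma>)\<^sup>2)" for n y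
  define Hs where "Hs n y = (\<Sum>\<gamma>\<in>{\<gamma>\<in>topspace TG. s \<gamma> = y \<and> \<gamma> \<in> K n}. (b n \<gamma>)\<^sup>2)" for n y
  have Hrc: "continuous_map TG euclidean (Hr n)" for n
    unfolding Hr_def by (rule fibre_pack(1)[OF assms(3) rc rloc bc Kc supp])
  have Hsc: "continuous_map TG euclidean (Hs n)" for n
    unfolding Hs_def by (rule fibre_pack(1)[OF assms(3) sc sloc bc Kc supp])
  have Hrconv: "(\<Sum>\<^sub>\<infinity>\<gamma>\<in>{\<gamma>\<in>topspace TG. r \<gamma> = y}. ennreal ((b n \<gamma>)\<^sup>2)) = ennreal (Hr n y)" for n y
    unfolding Hr_def by (rule fibre_pack(2)[OF assms(3) rc rloc bc Kc supp])
  have Hsconv: "(\<Sum>\<^sub>\<infinity>\<gamma>\<in>{\<gamma>\<in>topspace TG. s \<gamma> = y}. ennreal ((b n \<gamma>)\<^sup>2)) = ennreal (Hs n y)" for n y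
    unfolding Hs_def by (rule fibre_pack(2)[OF assms(3) sc sloc bc Kc supp])
  have Hr0: "0 \<le> Hr n y" for n y unfolding Hr_def by (rule sum_nonneg) simp
  have Hs0: "0 \<le> Hs n y" for n y unfolding Hs_def by (rule sum_nonneg) simp
  define \<psi> where "\<psi> n y = sqrt (max (Hs n y) (Hr n y))" for n y
  have \<psi>c: "continuous_map (subtopology TG (units (topspace TG) r)) euclidean (\<psi> n)" for n
  proof -
    have "continuous_map TG euclidean (\<psi> n)" unfolding \<psi>_def
      by (intro continuous_map_sqrt continuous_map_real_max Hsc Hrc)
    then show ?thesis by (rule continuous_map_from_subtopology)
  qed
  define c where "c n = sqrt (enn2real (l2sq (topspace TG) r s (d n)))" for n
  have lim': "((\<lambda>n. l2sq (topspace TG) r s (d n)) \<longlongrightarrow> ennreal 0) sequentially"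
    using lim unfolding d_def by simp
  have "((\<lambda>n. enn2real (l2sq (topspace TG) r s (d n))) \<longlongrightarrow> 0) sequentially"
    by (rule tendsto_enn2real[OF lim']) simp
  then have climit: "c \<longlonglongrightarrow> 0" unfolding c_def using tendsto_real_sqrt by fastforce
  have "\<forall>\<^sub>F n in sequentially. l2sq (topspace TG) r s (d n) < 1"
    using order_tendstoD(2)[OF lim, of 1] unfolding d_def by simp
  then obtain N where N: "\<And>n. n \<ge> N \<Longrightarrow> l2sq (topspace TG) r s (d n) < 1"
    unfolding eventually_sequentially by blast
  define \<phi> where "\<phi> x = sqrt (enn2real (max
        (\<Sum>\<^sub>\<infinity>\<gamma>\<in>{\<gamma>\<in>topspace TG. s \<gamma> = x}. ennreal ((Labs (f \<gamma>))\<^sup>2))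
        (\<Sum>\<^sub>\<infinity>\<gamma>\<in>{\<gamma>\<in>topspace TG. r \<gamma> = x}. ennreal ((Labs (f \<gamma>))\<^sup>2))))" for x
  have bound: "\<bar>\<psi> n y - \<phi> y\<bar> \<le> c n"
    if n: "n \<ge> N" and y: "y \<in> topspace (subtopology TG (units (topspace TG) r))" for n y
  proof -
    have yG0: "y \<in> units (topspace TG) r" using y by simp
    define L where "L = l2sq (topspace TG) r s (d n)"
    define D where "D = enn2real L"
    have LD: "L = ennreal D" unfolding D_def using N[OF n] unfolding L_def
      by (simp add: ennreal_enn2real_if) (metis ennreal_1 ennreal_less_top order.strict_trans top.not_eq_extremum)
    have D0: "0 \<le> D" unfolding D_def by simp
    have cD: "c n = sqrt D" unfolding c_def D_def L_def ..
    have dS: "(\<Sum>\<^sub>\<infinity>\<gamma>\<in>{\<gamma>\<in>topspace TG. s \<gamma> = y}. ennreal ((d n \<gamma>)\<^sup>2)) \<le> ennreal D"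
      unfolding LD[symmetric] L_def l2sq_def by (rule SUP_upper2[OF yG0]) simp
    have dR: "(\<Sum>\<^sub>\<infinity>\<gamma>\<in>{\<gamma>\<in>topspace TG. r \<gamma> = y}. ennreal ((d n \<gamma>)\<^sup>2)) \<le> ennreal D"
      unfolding LD[symmetric] L_def l2sq_def by (rule SUP_upper2[OF yG0]) simp
    have ad: "\<bar>Labs (f \<gamma>) - b n \<gamma>\<bar> \<le> d n \<gamma>" if "\<gamma> \<in> topspace TG" for \<gamma>
      unfolding b_def d_def by (rule Ldist_bound[OF fsec fnsec that])
    have MS: "(\<Sum>\<^sub>\<infinity>\<gamma>\<in>{\<gamma>\<in>topspace TG. s \<gamma> = y}. ennreal ((Labs (f \<gamma>))\<^sup>2)) =
        ennreal (enn2real (\<Sum>\<^sub>\<infinity>\<gamma>\<in>{\<gamma>\<in>topspace TG. s \<gamma> = y}. ennreal ((Labs (f \<gamma>))\<^sup>2)))"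
      "\<bar>sqrt (enn2real (\<Sum>\<^sub>\<infinity>\<gamma>\<in>{\<gamma>\<in>topspace TG. s \<gamma> = y}. ennreal ((Labs (f \<gamma>))\<^sup>2))) - sqrt (Hs n y)\<bar> \<le> sqrt D"
      by (rule mink_abs[where b="b n" and d="d n", OF _ _ _ Hsconv dS Hs0 D0];
          use ad in \<open>auto simp: Labs_def b_def\<close>)+
    have MR: "(\<Sum>\<^sub>\<infinity>\<gamma>\<in>{\<gamma>\<in>topspace TG. r \<gamma> = y}. ennreal ((Labs (f \<gamma>))\<^sup>2)) =
        ennreal (enn2real (\<Sum>\<^sub>\<infinity>\<gamma>\<in>{\<gamma>\<in>topspace TG. r \<gamma> = y}. ennreal ((Labs (f \<gamma>))\<^sup>2)))"
      "\<bar>sqrt (enn2real (\<Sum>\<^sub>\<infinity>\<gamma>\<in>{\<gamma>\<in>topspace TG. r \<gamma> = y}. ennreal ((Labs (f \<gamma>))\<^sup>2))) - sqrt (Hr n y)\<bar> \<le> sqrt D"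
      by (rule mink_abs[where b="b n" and d="d n", OF _ _ _ Hrconv dR Hr0 D0];
          use ad in \<open>auto simp: Labs_def b_def\<close>)+
    define \<alpha> where "\<alpha> = enn2real (\<Sum>\<^sub>\<infinity>\<gamma>\<in>{\<gamma>\<in>topspace TG. s \<gamma> = y}. ennreal ((Labs (f \<gamma>))\<^sup>2))"
    define \<beta> where "\<beta> = enn2real (\<Sum>\<^sub>\<infinity>\<gamma>\<in>{\<gamma>\<in>topspace TG. r \<gamma> = y}. ennreal ((Labs (f \<gamma>))\<^sup>2))"
    have "\<phi> y = sqrt (enn2real (max (ennreal \<alpha>) (ennreal \<beta>)))"
      unfolding \<phi>_def \<alpha>_def \<beta>_def using MS(1) MR(1) by simp
    also have "\<dots> = max (sqrt \<alpha>) (sqrt \<beta>)"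
    proof -
      have a0: "0 \<le> \<alpha>" "0 \<le> \<beta>" unfolding \<alpha>_def \<beta>_def by simp_all
      have "max (ennreal \<alpha>) (ennreal \<beta>) = ennreal (max \<alpha> \<beta>)" by (rule ennreal_max_eq[OF a0])
      moreover have "enn2real (ennreal (max \<alpha> \<beta>)) = max \<alpha> \<beta>" by (rule enn2real_ennreal) (use a0 in simp)
      ultimately show ?thesis by (simp only: sqrt_max)
    qed
    finally have \<phi>y: "\<phi> y = max (sqrt \<alpha>) (sqrt \<beta>)" .
    have "\<psi> n y = max (sqrt (Hs n y)) (sqrt (Hr n y))" unfolding \<psi>_def sqrt_max ..
    then show ?thesis unfolding \<phi>y cD
      by (rule ssubst) (rule max_diff_le; use MS(2) MR(2) \<alpha>_def \<beta>_def in \<open>simp add: abs_minus_commute\<close>)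
  qed
  have "continuous_map (subtopology TG (units (topspace TG) r)) euclidean \<phi>"
    by (rule unif_lim[OF \<psi>c bound climit])
  then show ?thesis unfolding \<phi>_def .
qed


end
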